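(* Fix the quantities $P(h)$, $P(h\mid h)$, $P(h\mid\ell)$ satisfying the standing assumptions, and fix a strictly proper scoring rule $PS$. Then there exists $n_0$, depending only on these data, with the following property. For every $n\ge n_0$ and every symmetric common prior on $\{\ell,h\}^n$ whose one- and two-agent marginals are given by these quantities, the truthful profile $\Sigma^*$ is a Bayesian $k_B$-strong equilibrium. Here $$k_B^h=\begin{cases}\left\lceil \dfrac{(n-1)\,\mathbb E_{s\sim P_\ell}[PS(s,P_\ell)-PS(s,P_h)]}{P(\ell\mid\ell)\,(PS(h,P_h)-PS(\ell,P_h))}\right\rceil & \text{if } PS(h,P_h)>PS(\ell,P_h),\\ n&\text{otherwise,}\end{cases}$$ $$k_B^\ell=\begin{cases}\left\lceil \dfrac{(n-1)\,\mathbb E_{s\sim P_h}[PS(s,P_h)-PS(s,P_\ell)]}{P(h\mid h)\,(PS(\ell,P_\ell)-PS(h,P_\ell))}\right\rceil & \text{if } PS(\ell,P_\ell)>PS(h,P_\ell),\\ n&\text{otherwise,}\end{cases}$$ and $k_B=\min(k_B^h,k_B^\ell,n)$. Moreover, for every integer $k$ with $k_B<k\le n$, $\Sigma^*$ is not a Bayesian $k$-strong equilibrium.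
   Context: Peer prediction setting. There are $n\ge 2$ agents $[n]$. Each agent $i$ privately observes a signal $\Psi_i\in\{\ell,h\}$ and reports $r_i\in\{\ell,h\}$. Signals are drawn from a common prior $Q$ on $\{\ell,h\}^n$ that is symmetric, i.e., invariant under permutations of the agents. $P(s)$ denotes the marginal probability that an agent has signal $s$. $P(s\mid s')$ denotes the probability that another agent $j\ne i$ has signal $s$ given that agent $i$ has signal $s'$. $P_{s'}=P(\cdot\mid s')$ is the corresponding distribution on $\{\ell,h\}$. Standing assumptions: $P(\ell),P(h)>0$, $P(h\mid h)>P(h\mid\ell)$, $P(h\mid\ell)>0$ and $P(\ell\mid h)>0$. A scoring rule $PS:\{\ell,h\}\times\Delta_{\{\ell,h\}}\to\mathbb R$ is strictly proper if $\mathbb E_{s\sim p}[PS(s,p)]>\mathbb E_{s\sim p}[PS(s,q)]$ for all distributions $p\ne q$. The mechanism gives agent $i$ the utility $v_i=\frac1{n-1}\sum_{j\ne i}PS(r_j,P_{r_i})$. A strategy is a pair $\sigma=(\beta_\ell,\beta_h)\in[0,1]^2$, where $\beta_\ell$ and $\beta_h$ are the probabilities of reporting $h$ given signal $\ell$ and signal $h$, respectively. Given signals, reports are drawn independently. The truthful strategy is $(0,1)$, and $\Sigma^*$ is the profile in which all agents play it. The interim utility $u_i(\Sigma\mid s)$ is the expectation of $v_i$ conditioned on $\Psi_i=s$. A profile $\Sigma$ is a Bayesian $k$-strong equilibrium if there is no set $D\subseteq[n]$ with $|D|\le k$ and no profile $\Sigma'$ such that: (1) agents outside $D$ keep their strategies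 from $\Sigma$; (2) $u_i(\Sigma'\mid s)\ge u_i(\Sigma\mid s)$ for all $i\in D$ and both $s\in\{\ell,h\}$; and (3) strict inequality holds for some $i\in D$ and some $s$. *)

theory Defs
  imports Complex_Main "HOL-Combinatorics.Permutations"
begin

(* Signals/reports: bool, with True = h and False = l.
   Agents: 0..n-1.  A signal (or report) vector is a function nat => bool
   that is False outside {..<n}.  A distribution on {l,h} is represented
   by its probability of h (a real in [0,1]). *)

definition vecs :: "nat \<Rightarrow> (nat \<Rightarrow> bool) set" where
  "vecs n = {s. \<forall>i\<ge>n. \<not> s i}"

definition symmetric_prior :: "nat \<Rightarrow> ((nat \<Rightarrow> bool) \<Rightarrow> real) \<Rightarrow> bool" where
  "symmetric_prior n Q \<longleftrightarrow>
     (\<forall>s\<in>vecs n. Q s \<ge> 0) \<and> (\<Sum>s\<in>vecs n. Q s) = 1 \<and>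
     (\<forall>\<pi> s. \<pi> permutes {..<n} \<longrightarrow> s \<in> vecs n \<longrightarrow> Q (s \<circ> \<pi>) = Q s)"

definition prob_ev :: "nat \<Rightarrow> ((nat \<Rightarrow> bool) \<Rightarrow> real) \<Rightarrow> ((nat \<Rightarrow> bool) \<Rightarrow> bool) \<Rightarrow> real" where
  "prob_ev n Q E = (\<Sum>s\<in>vecs n. if E s then Q s else 0)"

(* P(h): marginal probability that an agent (agent 0, by symmetry) has signal h *)
definition marg_h :: "nat \<Rightarrow> ((nat \<Rightarrow> bool) \<Rightarrow> real) \<Rightarrow> real" where
  "marg_h n Q = prob_ev n Q (\<lambda>s. s 0)"

(* P(h | b): probability that another agent (agent 1) has h given agent 0 has b *)
definition cond_h :: "nat \<Rightarrow> ((nat \<Rightarrow> bool) \<Rightarrow> real) \<Rightarrow> bool \<Rightarrow> real" where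
  "cond_h n Q b = prob_ev n Q (\<lambda>s. s 0 = b \<and> s 1) / prob_ev n Q (\<lambda>s. s 0 = b)"

(* strictly proper scoring rule; PS r p with p = probability of h *)
definition strictly_proper :: "(bool \<Rightarrow> real \<Rightarrow> real) \<Rightarrow> bool" where
  "strictly_proper PS \<longleftrightarrow>
     (\<forall>p q. 0 \<le> p \<and> p \<le> 1 \<and> 0 \<le> q \<and> q \<le> 1 \<and> p \<noteq> q \<longrightarrow>
        p * PS True p + (1 - p) * PS False p > p * PS True q + (1 - p) * PS False q)"

(* a strategy is (beta_l, beta_h); a profile assigns a strategy to each agent *)
definition valid_profile :: "nat \<Rightarrow> (nat \<Rightarrow> real \<times> real) \<Rightarrow> bool" where
  "valid_profile n \<Sigma> \<longleftrightarrow>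
     (\<forall>i<n. 0 \<le> fst (\<Sigma> i) \<and> fst (\<Sigma> i) \<le> 1 \<and> 0 \<le> snd (\<Sigma> i) \<and> snd (\<Sigma> i) \<le> 1)"

definition truthful :: "nat \<Rightarrow> real \<times> real" where
  "truthful = (\<lambda>i. (0, 1))"

definition rep_prob :: "real \<times> real \<Rightarrow> bool \<Rightarrow> bool \<Rightarrow> real" where
  "rep_prob \<sigma> sg r = (let \<beta> = (if sg then snd \<sigma> else fst \<sigma>) in if r then \<beta> else 1 - \<beta>)"

definition payment :: "(bool \<Rightarrow> real \<Rightarrow> real) \<Rightarrow> nat \<Rightarrow> ((nat \<Rightarrow> bool) \<Rightarrow> real)
    \<Rightarrow> nat \<Rightarrow> (nat \<Rightarrow> bool) \<Rightarrow> real" where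
  "payment PS n Q i r = (1 / (real n - 1)) * (\<Sum>j\<in>{..<n} - {i}. PS (r j) (cond_h n Q (r i)))"

definition interim_util :: "(bool \<Rightarrow> real \<Rightarrow> real) \<Rightarrow> nat \<Rightarrow> ((nat \<Rightarrow> bool) \<Rightarrow> real)
    \<Rightarrow> (nat \<Rightarrow> real \<times> real) \<Rightarrow> nat \<Rightarrow> bool \<Rightarrow> real" where
  "interim_util PS n Q \<Sigma> i sg =
     (\<Sum>s\<in>vecs n. \<Sum>r\<in>vecs n.
        if s i = sg then Q s * (\<Prod>j<n. rep_prob (\<Sigma> j) (s j) (r j)) * payment PS n Q i r else 0)
     / prob_ev n Q (\<lambda>s. s i = sg)"

definition bayes_strong_eq :: "(bool \<Rightarrow> real \<Rightarrow> real) \<Rightarrow> nat \<Rightarrow> ((nat \<Rightarrow> bool) \<Rightarrow> real)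
    \<Rightarrow> nat \<Rightarrow> (nat \<Rightarrow> real \<times> real) \<Rightarrow> bool" where
  "bayes_strong_eq PS n Q k \<Sigma> \<longleftrightarrow>
     \<not> (\<exists>D \<Sigma>'. D \<subseteq> {..<n} \<and> card D \<le> k \<and> valid_profile n \<Sigma>' \<and>
          (\<forall>i<n. i \<notin> D \<longrightarrow> \<Sigma>' i = \<Sigma> i) \<and>
          (\<forall>i\<in>D. \<forall>sg. interim_util PS n Q \<Sigma>' i sg \<ge> interim_util PS n Q \<Sigma> i sg) \<and>
          (\<exists>i\<in>D. \<exists>sg. interim_util PS n Q \<Sigma>' i sg > interim_util PS n Q \<Sigma> i sg))"

(* k_B^h, k_B^l, k_B ; phl = P(h|l), phh = P(h|h) *)
definition kB_h :: "(bool \<Rightarrow> real \<Rightarrow> real) \<Rightarrow> real \<Rightarrow> real \<Rightarrow> nat \<Rightarrow> int" where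
  "kB_h PS phl phh n =
     (if PS True phh > PS False phh then
        \<lceil>(real n - 1) * (phl * (PS True phl - PS True phh) + (1 - phl) * (PS False phl - PS False phh))
          / ((1 - phl) * (PS True phh - PS False phh))\<rceil>
      else int n)"

definition kB_l :: "(bool \<Rightarrow> real \<Rightarrow> real) \<Rightarrow> real \<Rightarrow> real \<Rightarrow> nat \<Rightarrow> int" where
  "kB_l PS phl phh n =
     (if PS False phl > PS True phl then
        \<lceil>(real n - 1) * (phh * (PS True phh - PS True phl) + (1 - phh) * (PS False phh - PS False phl))
          / (phh * (PS False phl - PS True phl))\<rceil>
      else int n)"

definition kB :: "(bool \<Rightarrow> real \<Rightarrow> real) \<Rightarrow> real \<Rightarrow> real \<Rightarrow> nat \<Rightarrow> int" where
  "kB PS phl phh n = min (kB_h PS phl phh n) (min (kB_l PS phl phh n) (int n))"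

end

theory Submission
  imports Defs
begin



lemma vecs_0: "vecs 0 = {\<lambda>_. False}"
  by (auto simp: vecs_def)

lemma vecs_Suc: "vecs (Suc n) = (\<lambda>(s,b). s(n:=b)) ` (vecs n \<times> UNIV)"
proof
  show "vecs (Suc n) \<subseteq> (\<lambda>(s,b). s(n:=b)) ` (vecs n \<times> UNIV)"
  proof
    fix s assume s: "s \<in> vecs (Suc n)"
    have "s = (\<lambda>(s,b). s(n:=b)) (s(n:=False), s n)" by auto
    moreover have "s(n:=False) \<in> vecs n" using s by (auto simp: vecs_def)
    ultimately show "s \<in> (\<lambda>(s,b). s(n:=b)) ` (vecs n \<times> UNIV)" by blast
  qed
qed (auto simp: vecs_def)

lemma vecs_inj: "inj_on (\<lambda>(s,b). s(n:=b)) (vecs n \<times> UNIV)"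
proof (rule inj_onI, clarsimp)
  fix s b s' b' assume "s \<in> vecs n" "s' \<in> vecs n" and e: "s(n := b) = s'(n := b')"
  then have "b = b'" by (metis fun_upd_same)
  moreover have "s = s'"
  proof
    fix x show "s x = s' x"
      using e \<open>s \<in> vecs n\<close> \<open>s' \<in> vecs n\<close> by (cases "x = n") (auto simp: vecs_def dest: fun_cong[where x=x])
  qed
  ultimately show "s = s' \<and> b = b'" by simp
qed

lemma finite_vecs: "finite (vecs n)"
  by (induction n) (auto simp: vecs_0 vecs_Suc)

lemma sum_vecs_Suc: "(\<Sum>s\<in>vecs (Suc n). f s) = (\<Sum>s\<in>vecs n. f (s(n:=True)) + f (s(n:=False)))"
proof -
  have "(\<Sum>s\<in>vecs (Suc n). f s) = (\<Sum>p\<in>vecs n \<times> UNIV. f ((\<lambda>(s,b). s(n:=b)) p))"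
    unfolding vecs_Suc by (rule sum.reindex[OF vecs_inj, unfolded comp_def])
  also have "\<dots> = (\<Sum>s\<in>vecs n. \<Sum>b\<in>UNIV. f (s(n:=b)))"
    by (simp add: sum.cartesian_product split_def)
  also have "\<dots> = (\<Sum>s\<in>vecs n. f (s(n:=True)) + f (s(n:=False)))"
    by (simp add: UNIV_bool add.commute)
  finally show ?thesis .
qed

definition mm :: "(nat \<Rightarrow> bool \<Rightarrow> real) \<Rightarrow> nat \<Rightarrow> nat \<Rightarrow> bool \<Rightarrow> real" where
  "mm w n k a = (if k < n then w k a else (if a then 0 else 1))"

lemma marg2:
  assumes w: "\<And>k. w k True + w k False = 1" and ij: "i \<noteq> j"
  shows "(\<Sum>r\<in>vecs n. (\<Prod>k<n. w k (r k)) * F (r i) (r j)) =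
         (\<Sum>a\<in>UNIV. \<Sum>b\<in>UNIV. mm w n i a * mm w n j b * F a b)"
proof (induction n arbitrary: F)
  case 0
  then show ?case by (simp add: vecs_0 mm_def UNIV_bool)
next
  case (Suc n)
  define F' where "F' u v = (\<Sum>c\<in>UNIV. w n c * F (if i = n then c else u) (if j = n then c else v))" for u v
  have "(\<Sum>r\<in>vecs (Suc n). (\<Prod>k<Suc n. w k (r k)) * F (r i) (r j))
      = (\<Sum>s\<in>vecs n. (\<Prod>k<n. w k (s k)) * F' (s i) (s j))"
    unfolding sum_vecs_Suc
  proof (rule sum.cong[OF refl])
    fix s assume s: "s \<in> vecs n"
    have pr: "(\<Prod>k<n. w k ((s(n:=c)) k)) = (\<Prod>k<n. w k (s k))" for c
      by (rule prod.cong) auto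
    have "s i = False" if "i = n" using s that by (simp add: vecs_def)
    moreover have "s j = False" if "j = n" using s that by (simp add: vecs_def)
    ultimately show "(\<Prod>k<Suc n. w k ((s(n := True)) k)) * F ((s(n := True)) i) ((s(n := True)) j) +
         (\<Prod>k<Suc n. w k ((s(n := False)) k)) * F ((s(n := False)) i) ((s(n := False)) j) =
         (\<Prod>k<n. w k (s k)) * F' (s i) (s j)"
      using ij by (auto simp: F'_def UNIV_bool pr algebra_simps)
  qed
  also have "\<dots> = (\<Sum>a\<in>UNIV. \<Sum>b\<in>UNIV. mm w n i a * mm w n j b * F' a b)" by (rule Suc.IH)
  also have "\<dots> = (\<Sum>a\<in>UNIV. \<Sum>b\<in>UNIV. mm w (Suc n) i a * mm w (Suc n) j b * F a b)"
  proof -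
    have w1: "w n True = 1 - w n False" using w[of n] by simp
    show ?thesis
      using ij
      by (cases "i < n"; cases "j < n"; cases "i = n"; cases "j = n")
         (auto simp: mm_def F'_def UNIV_bool algebra_simps w1)
  qed
  finally show ?case .
qed

lemma perm_vecs: "\<pi> permutes {..<n} \<Longrightarrow> s \<in> vecs n \<Longrightarrow> s \<circ> \<pi> \<in> vecs n"
  by (auto simp: vecs_def permutes_not_in)

lemma sum_vecs_perm:
  assumes p: "\<pi> permutes {..<n}"
  shows "(\<Sum>s\<in>vecs n. h (s \<circ> \<pi>)) = (\<Sum>s\<in>vecs n. h s)"
proof (rule sum.reindex_bij_witness[where j="\<lambda>s. s \<circ> \<pi>" and i="\<lambda>s. s \<circ> inv \<pi>"])
  have ip: "inv \<pi> permutes {..<n}" using p by (rule permutes_inv)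
  fix s assume "s \<in> vecs n"
  show "s \<circ> \<pi> \<circ> inv \<pi> = s" using p by (simp add: comp_assoc permutes_inv_o(1))
  show "s \<circ> \<pi> \<in> vecs n" using p \<open>s \<in> vecs n\<close> by (rule perm_vecs)
  show "s \<circ> inv \<pi> \<circ> \<pi> = s" using p by (simp add: comp_assoc permutes_inv_o(2))
  show "s \<circ> inv \<pi> \<in> vecs n" using ip \<open>s \<in> vecs n\<close> by (rule perm_vecs)
  show "h (s \<circ> \<pi>) = h (s \<circ> \<pi>)" ..
qed

lemma prob_perm:
  assumes sp: "symmetric_prior n Q" and p: "\<pi> permutes {..<n}"
  shows "prob_ev n Q (\<lambda>s. E (s \<circ> \<pi>)) = prob_ev n Q E"
proof -
  have "prob_ev n Q E = (\<Sum>s\<in>vecs n. (\<lambda>s. if E s then Q s else 0) (s \<circ> \<pi>))"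
    unfolding prob_ev_def by (rule sum_vecs_perm[OF p, symmetric])
  also have "\<dots> = prob_ev n Q (\<lambda>s. E (s \<circ> \<pi>))"
    unfolding prob_ev_def
    using sp p by (intro sum.cong) (auto simp: symmetric_prior_def)
  finally show ?thesis by simp
qed

lemma prob_pair:
  assumes sp: "symmetric_prior n Q" and ij: "i \<noteq> j" "i < n" "j < n" and n: "n \<ge> 2"
  shows "prob_ev n Q (\<lambda>s. P (s i) (s j)) = prob_ev n Q (\<lambda>s. P (s 0) (s 1))"
proof -
  define t where "t = transpose 0 i"
  define \<pi> where "\<pi> = t \<circ> transpose 1 (t j)"
  have tj: "t j < n" using ij by (auto simp: t_def transpose_def)
  have p: "\<pi> permutes {..<n}" unfolding \<pi>_def t_def
    using ij n tj[unfolded t_def]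
    by (intro permutes_compose permutes_swap_id) auto
  have tj0: "t j \<noteq> 0" using ij by (auto simp: t_def transpose_def)
  have "\<pi> 0 = i" using tj0 by (simp add: \<pi>_def t_def transpose_def)
  moreover have "\<pi> 1 = j" by (simp add: \<pi>_def t_def transpose_def)
  ultimately have "prob_ev n Q (\<lambda>s. P ((s \<circ> \<pi>) 0) ((s \<circ> \<pi>) 1)) = prob_ev n Q (\<lambda>s. P (s i) (s j))"
    by simp
  with prob_perm[OF sp p, of "\<lambda>s. P (s 0) (s 1)"] show ?thesis by simp
qed

lemma prob_split:
  "prob_ev n Q E = prob_ev n Q (\<lambda>s. E s \<and> F s) + prob_ev n Q (\<lambda>s. E s \<and> \<not> F s)"
  unfolding prob_ev_def by (subst sum.distrib[symmetric]) (rule sum.cong, auto)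

lemma rep_sum: "rep_prob \<sigma> sg True + rep_prob \<sigma> sg False = 1"
  by (simp add: rep_prob_def Let_def)

lemma inner_r:
  assumes ij: "i < n"
  shows "(\<Sum>r\<in>vecs n. (\<Prod>k<n. rep_prob (\<Sigma> k) (s k) (r k)) * payment PS n Q i r)
       = (1 / (real n - 1)) * (\<Sum>j\<in>{..<n} - {i}. \<Sum>a\<in>UNIV. \<Sum>b\<in>UNIV.
            rep_prob (\<Sigma> i) (s i) a * rep_prob (\<Sigma> j) (s j) b * PS b (cond_h n Q a))"
proof -
  have "(\<Sum>r\<in>vecs n. (\<Prod>k<n. rep_prob (\<Sigma> k) (s k) (r k)) * payment PS n Q i r)
      = (1 / (real n - 1)) * (\<Sum>j\<in>{..<n} - {i}. \<Sum>r\<in>vecs n. (\<Prod>k<n. rep_prob (\<Sigma> k) (s k) (r k)) * PS (r j) (cond_h n Q (r i)))"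
    unfolding payment_def
    by (simp add: sum_distrib_left sum_distrib_right sum.swap[of _ "vecs n"] algebra_simps)
  also have "\<dots> = (1 / (real n - 1)) * (\<Sum>j\<in>{..<n} - {i}. \<Sum>a\<in>UNIV. \<Sum>b\<in>UNIV.
            rep_prob (\<Sigma> i) (s i) a * rep_prob (\<Sigma> j) (s j) b * PS b (cond_h n Q a))"
  proof (rule arg_cong[where f="\<lambda>x. _ * x"], rule sum.cong[OF refl])
    fix j assume j: "j \<in> {..<n} - {i}"
    have "(\<Sum>r\<in>vecs n. (\<Prod>k<n. rep_prob (\<Sigma> k) (s k) (r k)) * (\<lambda>a b. PS b (cond_h n Q a)) (r i) (r j))
        = (\<Sum>a\<in>UNIV. \<Sum>b\<in>UNIV. mm (\<lambda>k. rep_prob (\<Sigma> k) (s k)) n i a * mm (\<lambda>k. rep_prob (\<Sigma> k) (s k)) n j b * PS b (cond_h n Q a))"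
      using j by (intro marg2) (auto simp: rep_sum)
    then show "(\<Sum>r\<in>vecs n. (\<Prod>k<n. rep_prob (\<Sigma> k) (s k) (r k)) * PS (r j) (cond_h n Q (r i))) =
         (\<Sum>a\<in>UNIV. \<Sum>b\<in>UNIV. rep_prob (\<Sigma> i) (s i) a * rep_prob (\<Sigma> j) (s j) b * PS b (cond_h n Q a))"
      using j ij by (simp add: mm_def)
  qed
  finally show ?thesis .
qed

lemma util_closed1:
  assumes sp: "symmetric_prior n Q" and n: "n \<ge> 2" and i: "i < n"
    and pos: "prob_ev n Q (\<lambda>s. s 0 = sg) > 0"
  shows "interim_util PS n Q \<Sigma> i sg = (1 / (real n - 1)) * (\<Sum>j\<in>{..<n} - {i}.
      cond_h n Q sg * (\<Sum>a\<in>UNIV. \<Sum>b\<in>UNIV. rep_prob (\<Sigma> i) sg a * rep_prob (\<Sigma> j) True b * PS b (cond_h n Q a))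
    + (1 - cond_h n Q sg) * (\<Sum>a\<in>UNIV. \<Sum>b\<in>UNIV. rep_prob (\<Sigma> i) sg a * rep_prob (\<Sigma> j) False b * PS b (cond_h n Q a)))"
proof -
  define H where "H j t = (\<Sum>a\<in>UNIV. \<Sum>b\<in>UNIV. rep_prob (\<Sigma> i) sg a * rep_prob (\<Sigma> j) t b * PS b (cond_h n Q a))" for j t
  define P0 where "P0 = prob_ev n Q (\<lambda>s. s 0 = sg)"
  define c where "c = cond_h n Q sg"
  have num: "(\<Sum>s\<in>vecs n. \<Sum>r\<in>vecs n.
        if s i = sg then Q s * (\<Prod>j<n. rep_prob (\<Sigma> j) (s j) (r j)) * payment PS n Q i r else 0)
      = (1 / (real n - 1)) * (\<Sum>j\<in>{..<n} - {i}. \<Sum>s\<in>vecs n. if s i = sg then Q s * H j (s j) else 0)"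
  proof -
    have "(\<Sum>s\<in>vecs n. \<Sum>r\<in>vecs n.
        if s i = sg then Q s * (\<Prod>j<n. rep_prob (\<Sigma> j) (s j) (r j)) * payment PS n Q i r else 0)
      = (\<Sum>s\<in>vecs n. if s i = sg then Q s * ((1 / (real n - 1)) * (\<Sum>j\<in>{..<n} - {i}. H j (s j))) else 0)"
    proof (rule sum.cong[OF refl])
      fix s assume "s \<in> vecs n"
      show "(\<Sum>r\<in>vecs n. if s i = sg then Q s * (\<Prod>j<n. rep_prob (\<Sigma> j) (s j) (r j)) * payment PS n Q i r else 0)
          = (if s i = sg then Q s * ((1 / (real n - 1)) * (\<Sum>j\<in>{..<n} - {i}. H j (s j))) else 0)"
      proof (cases "s i = sg")
        case True
        have "(\<Sum>r\<in>vecs n. Q s * (\<Prod>j<n. rep_prob (\<Sigma> j) (s j) (r j)) * payment PS n Q i r)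
            = Q s * (\<Sum>r\<in>vecs n. (\<Prod>j<n. rep_prob (\<Sigma> j) (s j) (r j)) * payment PS n Q i r)"
          by (simp add: sum_distrib_left mult.assoc)
        also have "\<dots> = Q s * ((1 / (real n - 1)) * (\<Sum>j\<in>{..<n} - {i}. H j (s j)))"
          unfolding inner_r[OF i] H_def using True by simp
        finally show ?thesis using True by simp
      qed simp
    qed
    also have "\<dots> = (1 / (real n - 1)) * (\<Sum>j\<in>{..<n} - {i}. \<Sum>s\<in>vecs n. if s i = sg then Q s * H j (s j) else 0)"
    proof -
      have "\<And>s. (if s i = sg then Q s * ((1 / (real n - 1)) * (\<Sum>j\<in>{..<n} - {i}. H j (s j))) else 0)
          = (1 / (real n - 1)) * (\<Sum>j\<in>{..<n} - {i}. if s i = sg then Q s * H j (s j) else 0)"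
        by (simp add: sum_distrib_left)
      then have "(\<Sum>s\<in>vecs n. if s i = sg then Q s * ((1 / (real n - 1)) * (\<Sum>j\<in>{..<n} - {i}. H j (s j))) else 0)
          = (1 / (real n - 1)) * (\<Sum>s\<in>vecs n. \<Sum>j\<in>{..<n} - {i}. if s i = sg then Q s * H j (s j) else 0)"
        by (simp only: sum_distrib_left)
      then show ?thesis by (simp only: sum.swap[of _ "vecs n"])
    qed
    finally show ?thesis .
  qed
  have inner: "(\<Sum>s\<in>vecs n. if s i = sg then Q s * H j (s j) else 0) = P0 * (c * H j True + (1 - c) * H j False)"
    if j: "j \<in> {..<n} - {i}" for j
  proof -
    have "(\<Sum>s\<in>vecs n. if s i = sg then Q s * H j (s j) else 0)
        = H j True * prob_ev n Q (\<lambda>s. s i = sg \<and> s j) + H j False * prob_ev n Q (\<lambda>s. s i = sg \<and> \<not> s j)"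
      unfolding prob_ev_def sum_distrib_left sum.distrib[symmetric]
      by (rule sum.cong) auto
    also have "prob_ev n Q (\<lambda>s. s i = sg \<and> s j) = prob_ev n Q (\<lambda>s. s 0 = sg \<and> s 1)"
      using prob_pair[OF sp _ i _ n, of j "\<lambda>u v. u = sg \<and> v"] j by auto
    also have "prob_ev n Q (\<lambda>s. s i = sg \<and> \<not> s j) = prob_ev n Q (\<lambda>s. s 0 = sg \<and> \<not> s 1)"
      using prob_pair[OF sp _ i _ n, of j "\<lambda>u v. u = sg \<and> \<not> v"] j by auto
    also have "prob_ev n Q (\<lambda>s. s 0 = sg \<and> s 1) = c * P0"
      using pos by (simp add: c_def cond_h_def P0_def)
    also have "prob_ev n Q (\<lambda>s. s 0 = sg \<and> \<not> s 1) = P0 - c * P0"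
      using prob_split[of n Q "\<lambda>s. s 0 = sg" "\<lambda>s. s 1"] \<open>prob_ev n Q (\<lambda>s. s 0 = sg \<and> s 1) = c * P0\<close>
      by (simp add: P0_def)
    finally show ?thesis by (simp add: algebra_simps)
  qed
  have den: "prob_ev n Q (\<lambda>s. s i = sg) = P0"
  proof -
    define j where "j = (if i = 0 then 1 else (0::nat))"
    have "j \<noteq> i" "j < n" using n by (auto simp: j_def)
    then show ?thesis using prob_pair[OF sp _ i _ n, of j "\<lambda>u v. u = sg"] by (simp add: P0_def)
  qed
  have "interim_util PS n Q \<Sigma> i sg
      = (1 / (real n - 1)) * (\<Sum>j\<in>{..<n} - {i}. P0 * (c * H j True + (1 - c) * H j False)) / P0"
    unfolding interim_util_def num den using inner by simp
  also have "\<dots> = (1 / (real n - 1)) * (\<Sum>j\<in>{..<n} - {i}. c * H j True + (1 - c) * H j False)"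
    using pos by (simp add: P0_def sum_distrib_left[symmetric])
  finally show ?thesis by (simp add: H_def c_def)
qed

definition VV :: "(bool \<Rightarrow> real \<Rightarrow> real) \<Rightarrow> nat \<Rightarrow> ((nat \<Rightarrow> bool) \<Rightarrow> real) \<Rightarrow> bool \<Rightarrow> bool \<Rightarrow> real \<Rightarrow> real \<Rightarrow> real" where
  "VV PS n Q sg a X Z = cond_h n Q sg * PS True (cond_h n Q a) + (1 - cond_h n Q sg) * PS False (cond_h n Q a)
     + (PS True (cond_h n Q a) - PS False (cond_h n Q a)) * ((1 - cond_h n Q sg) * X - cond_h n Q sg * Z) / (real n - 1)"

lemma util_closed:
  assumes sp: "symmetric_prior n Q" and n: "n \<ge> 2" and i: "i < n"
    and pos: "prob_ev n Q (\<lambda>s. s 0 = sg) > 0"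
  shows "interim_util PS n Q \<Sigma> i sg =
     rep_prob (\<Sigma> i) sg True * VV PS n Q sg True (\<Sum>j\<in>{..<n} - {i}. fst (\<Sigma> j)) (\<Sum>j\<in>{..<n} - {i}. 1 - snd (\<Sigma> j))
   + rep_prob (\<Sigma> i) sg False * VV PS n Q sg False (\<Sum>j\<in>{..<n} - {i}. fst (\<Sigma> j)) (\<Sum>j\<in>{..<n} - {i}. 1 - snd (\<Sigma> j))"
proof -
  define c where "c = cond_h n Q sg"
  define r1 where "r1 = rep_prob (\<Sigma> i) sg True"
  define r0 where "r0 = rep_prob (\<Sigma> i) sg False"
  define T1 where "T1 = PS True (cond_h n Q True)"
  define F1 where "F1 = PS False (cond_h n Q True)"
  define T0 where "T0 = PS True (cond_h n Q False)"
  define F0 where "F0 = PS False (cond_h n Q False)"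
  define u where "u j = (1 - c) * fst (\<Sigma> j) - c * (1 - snd (\<Sigma> j))" for j
  define J where "J = {..<n} - {i}"
  have cardJ: "real (card J) = real n - 1" using i n by (simp add: J_def of_nat_diff)
  have N: "real n - 1 > 0" using n by simp
  have tm: "c * (\<Sum>a\<in>UNIV. \<Sum>b\<in>UNIV. rep_prob (\<Sigma> i) sg a * rep_prob (\<Sigma> j) True b * PS b (cond_h n Q a))
    + (1 - c) * (\<Sum>a\<in>UNIV. \<Sum>b\<in>UNIV. rep_prob (\<Sigma> i) sg a * rep_prob (\<Sigma> j) False b * PS b (cond_h n Q a))
    = r1 * (c * T1 + (1 - c) * F1) + r0 * (c * T0 + (1 - c) * F0) + (r1 * (T1 - F1) + r0 * (T0 - F0)) * u j" for j
    by (simp add: UNIV_bool rep_prob_def Let_def u_def r1_def r0_def T1_def F1_def T0_def F0_def algebra_simps)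
  have "interim_util PS n Q \<Sigma> i sg = (1 / (real n - 1)) * (\<Sum>j\<in>J.
       r1 * (c * T1 + (1 - c) * F1) + r0 * (c * T0 + (1 - c) * F0) + (r1 * (T1 - F1) + r0 * (T0 - F0)) * u j)"
    unfolding util_closed1[OF sp n i pos] tm[unfolded c_def] J_def c_def ..
  also have "\<dots> = (1 / (real n - 1)) * ((real n - 1) * (r1 * (c * T1 + (1 - c) * F1) + r0 * (c * T0 + (1 - c) * F0))
        + (r1 * (T1 - F1) + r0 * (T0 - F0)) * (\<Sum>j\<in>J. u j))"
    by (simp add: sum.distrib sum_distrib_left[symmetric] sum_distrib_right[symmetric] cardJ[symmetric] mult.commute)
  also have "(\<Sum>j\<in>J. u j) = (1 - c) * (\<Sum>j\<in>J. fst (\<Sigma> j)) - c * (\<Sum>j\<in>J. 1 - snd (\<Sigma> j))"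
    by (simp only: u_def sum_subtractf sum_distrib_left[symmetric])
  finally have eq: "interim_util PS n Q \<Sigma> i sg = (1 / (real n - 1)) * ((real n - 1) * (r1 * (c * T1 + (1 - c) * F1) + r0 * (c * T0 + (1 - c) * F0))
        + (r1 * (T1 - F1) + r0 * (T0 - F0)) * ((1 - c) * (\<Sum>j\<in>J. fst (\<Sigma> j)) - c * (\<Sum>j\<in>J. 1 - snd (\<Sigma> j))))" .
  have v1: "VV PS n Q sg True X Z = c*T1 + (1-c)*F1 + (T1 - F1)*((1-c)*X - c*Z)/(real n - 1)" for X Z
    by (simp add: VV_def c_def T1_def F1_def)
  have v0: "VV PS n Q sg False X Z = c*T0 + (1-c)*F0 + (T0 - F0)*((1-c)*X - c*Z)/(real n - 1)" for X Z
    by (simp add: VV_def c_def T0_def F0_def)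
  have gen: "(1/N)*(N*(r1*a1 + r0*a0) + (r1*d1 + r0*d0)*U) = r1*(a1 + d1*U/N) + r0*(a0 + d0*U/N)"
    if "N > 0" for N a1 a0 d1 d0 U :: real
    using that by (simp add: field_simps)
  show ?thesis unfolding v1 v0 r1_def[symmetric] r0_def[symmetric] J_def[symmetric] eq
    using gen[OF N] by (simp add: mult.assoc)
qed



lemma sum_le_card_bound:
  assumes "finite D" "i \<in> D" "\<forall>j\<in>D. x j \<le> M"
  shows "(\<Sum>j\<in>D - {i}. x j) \<le> (real (card D) - 1) * M"
proof -
  have "(\<Sum>j\<in>D - {i}. x j) \<le> (\<Sum>j\<in>D - {i}. M)" using assms by (intro sum_mono) auto
  also have "\<dots> = (real (card D) - 1) * M"
  proof -
    have "card D \<ge> 1" using assms by (metis card_0_eq empty_iff less_one not_le)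
    then show ?thesis using assms by (simp add: card_Diff_singleton of_nat_diff)
  qed
  finally show ?thesis .
qed

lemma sum_nonneg_D:
  assumes "\<forall>j\<in>D. 0 \<le> x j"
  shows "0 \<le> (\<Sum>j\<in>D - {i}. (x j :: real))"
  using assms by (intro sum_nonneg) auto

lemma core:
  fixes x z :: "nat \<Rightarrow> real" and D :: "nat set"
  assumes fin: "finite D"
    and rng: "\<forall>j\<in>D. 0 \<le> x j \<and> x j \<le> 1 \<and> 0 \<le> z j \<and> z j \<le> 1"
    and pq: "0 < p" "p < q" "q < 1" "N > 0" "El > 0" "Eh > 0" "Dl < Dh"
    and bh: "Dh > 0 \<Longrightarrow> (real (card D) - 1) * (1 - p) * Dh < N * El"
    and bl: "Dl < 0 \<Longrightarrow> (real (card D) - 1) * q * (- Dl) < N * Eh"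
    and ge: "\<forall>i\<in>D. 0 \<le> (1 - x i) * Dl * ((1-p) * (\<Sum>j\<in>D-{i}. x j) - p * (\<Sum>j\<in>D-{i}. z j))
                      + x i * (Dh * ((1-p) * (\<Sum>j\<in>D-{i}. x j) - p * (\<Sum>j\<in>D-{i}. z j)) - N * El)
                 \<and> 0 \<le> (1 - z i) * Dh * ((1-q) * (\<Sum>j\<in>D-{i}. x j) - q * (\<Sum>j\<in>D-{i}. z j))
                      + z i * (Dl * ((1-q) * (\<Sum>j\<in>D-{i}. x j) - q * (\<Sum>j\<in>D-{i}. z j)) - N * Eh)"
  shows "\<forall>i\<in>D. x i = 0 \<and> z i = 0"
proof -
  define X where "X i = (\<Sum>j\<in>D-{i}. x j)" for i
  define Z where "Z i = (\<Sum>j\<in>D-{i}. z j)" for i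
  define d where "d = real (card D) - 1"
  define A where "A i = (1-p) * X i - p * Z i" for i
  define B where "B i = (1-q) * X i - q * Z i" for i
  have GL: "0 \<le> (1 - x i) * Dl * A i + x i * (Dh * A i - N * El)" if "i \<in> D" for i
    using ge that unfolding A_def X_def Z_def by blast
  have GH: "0 \<le> (1 - z i) * Dh * B i + z i * (Dl * B i - N * Eh)" if "i \<in> D" for i
    using ge that unfolding B_def X_def Z_def by blast
  have X0: "0 \<le> X i" "0 \<le> Z i" for i using rng unfolding X_def Z_def by (auto intro!: sum_nonneg)
  have Xd: "X i \<le> d" "Z i \<le> d" if "i \<in> D" for i
    using sum_le_card_bound[OF fin that, of x 1] sum_le_card_bound[OF fin that, of z 1] rng
    unfolding X_def Z_def d_def by auto
  have BA: "B i \<le> A i" for i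
  proof -
    have "A i - B i = (q - p) * (X i + Z i)" by (simp add: A_def B_def algebra_simps)
    moreover have "0 \<le> (q - p) * (X i + Z i)" using pq X0[of i] by simp
    ultimately show ?thesis by simp
  qed
  have Ale: "A i \<le> (1 - p) * X i" "B i \<ge> - q * Z i" for i
    using X0[of i] pq by (auto simp: A_def B_def)
  have zeroAB: "x i = 0 \<and> z i = 0" if i: "i \<in> D" and a: "A i = 0" and b: "B i = 0" for i
  proof -
    from GL[OF i] a have "0 \<le> - (x i * (N * El))" by simp
    then have "x i * (N * El) \<le> 0" by simp
    moreover have "0 < N * El" using pq by simp
    ultimately have "x i \<le> 0" by (smt (verit) mult_pos_pos)
    moreover from GH[OF i] b have "z i * (N * Eh) \<le> 0" by simp
    moreover have "0 < N * Eh" using pq by simp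
    ultimately show ?thesis using rng i by (smt (verit) mult_pos_pos)
  qed
  show ?thesis
  proof (cases "Dl < 0 \<and> 0 < Dh")
    case True
    have Anp: "A i \<le> 0" if i: "i \<in> D" for i
    proof (rule ccontr)
      assume "\<not> A i \<le> 0" then have Ap: "A i > 0" by simp
      have "Dh * A i \<le> Dh * ((1 - p) * d)"
        using Ale(1)[of i] Xd(1)[OF i] True pq by (intro mult_left_mono) (auto intro: order_trans)
      also have "\<dots> < N * El" using bh True by (simp add: d_def mult.commute mult.left_commute)
      finally have neg: "Dh * A i - N * El < 0" by simp
      have t1: "(1 - x i) * Dl * A i \<le> 0"
        using rng i True Ap by (simp add: mult_nonneg_nonpos mult_nonpos_nonneg mult_le_0_iff)
      show False
      proof (cases "x i = 0")
        case True
        then show False using GL[OF i] \<open>Dl < 0 \<and> 0 < Dh\<close> Ap mult_neg_pos[of Dl "A i"] by simp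
      next
        case False
        then have "x i > 0" using rng i by auto
        then have "x i * (Dh * A i - N * El) < 0" using neg by (simp add: mult_pos_neg)
        then show False using GL[OF i] t1 by linarith
      qed
    qed
    have Bnn: "B i \<ge> 0" if i: "i \<in> D" for i
    proof (rule ccontr)
      assume "\<not> B i \<ge> 0" then have Bn: "B i < 0" by simp
      have "Dl * B i = (- Dl) * (- B i)" by simp
      also have "\<dots> \<le> (- Dl) * (q * d)"
      proof -
        have "q * Z i \<le> q * d" using Xd(2)[OF i] pq by (intro mult_left_mono) auto
        then show ?thesis using Ale(2)[of i] True by (intro mult_left_mono) auto
      qed
      also have "\<dots> < N * Eh" using bl True by (simp add: d_def mult.commute mult.left_commute)
      finally have neg: "Dl * B i - N * Eh < 0" by simp
      have t1: "(1 - z i) * Dh * B i \<le> 0"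
        using rng i True Bn by (simp add: mult_nonneg_nonpos mult_le_0_iff)
      show False
      proof (cases "z i = 0")
        case True
        then show False using GH[OF i] \<open>Dl < 0 \<and> 0 < Dh\<close> Bn mult_pos_neg[of Dh "B i"] by simp
      next
        case False
        then have "z i > 0" using rng i by auto
        then have "z i * (Dl * B i - N * Eh) < 0" using neg by (simp add: mult_pos_neg)
        then show False using GH[OF i] t1 by linarith
      qed
    qed
    show ?thesis
    proof
      fix i assume i: "i \<in> D"
      have "A i = 0" "B i = 0" using Anp[OF i] Bnn[OF i] BA[of i] by linarith+
      then show "x i = 0 \<and> z i = 0" using zeroAB[OF i] by simp
    qed
  next
    case False
    show ?thesis
    proof (cases "D = {}")
      case True then show ?thesis by simp
    next
      case Dne: False
      show ?thesis
      proof (cases "0 \<le> Dl")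
        case Dlp: True
        then have Dhp: "0 < Dh" using pq by simp
        obtain m where m: "m \<in> D" "\<forall>j\<in>D. x j \<le> x m"
        proof -
          have "Max (x ` D) \<in> x ` D" using fin Dne by (intro Max_in) auto
          then obtain m where "m \<in> D" "x m = Max (x ` D)" by auto
          moreover have "\<forall>j\<in>D. x j \<le> Max (x ` D)" using fin by auto
          ultimately show ?thesis using that by auto
        qed
        have M0: "x m = 0"
        proof (rule ccontr)
          assume "x m \<noteq> 0" then have Mp: "x m > 0" using rng m by auto
          have XM: "X m \<le> d * x m" using sum_le_card_bound[OF fin m(1), of x "x m"] m by (simp add: X_def d_def)
          have "(1 - x m) * Dl * A m + x m * (Dh * A m - N * El) < 0"
          proof (cases "A m \<le> 0")
            case True
            have "(1 - x m) * Dl * A m \<le> 0" using rng m Dlp True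
              by (intro mult_nonneg_nonpos) auto
            moreover have "Dh * A m \<le> 0" using Dhp True by (simp add: mult_nonneg_nonpos)
            then have "x m * (Dh * A m - N * El) \<le> x m * (- N * El)" using Mp by (intro mult_left_mono) auto
            moreover have "x m * (- N * El) < 0" using Mp pq by (simp add: mult_pos_neg)
            ultimately show ?thesis by linarith
          next
            case False
            have "(1 - x m) * Dl * A m \<le> (1 - x m) * Dh * A m" using rng m pq False
              by (intro mult_right_mono mult_left_mono) auto
            moreover have "Dh * A m \<le> Dh * ((1 - p) * (d * x m))"
            proof -
              have "(1 - p) * X m \<le> (1 - p) * (d * x m)" using XM pq by (intro mult_left_mono) auto
              then show ?thesis using Ale(1)[of m] Dhp by (intro mult_left_mono) auto
            qed
            moreover have "Dh * ((1 - p) * (d * x m)) < N * El * x m"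
            proof -
              have "d * (1 - p) * Dh < N * El" using bh Dhp by (simp add: d_def)
              then have "(d * (1 - p) * Dh) * x m < (N * El) * x m" using Mp by (intro mult_strict_right_mono) auto
              then show ?thesis by (simp add: algebra_simps)
            qed
            ultimately show ?thesis by (simp add: algebra_simps)
          qed
          with GL[OF m(1)] show False by linarith
        qed
        have x0: "x j = 0" if "j \<in> D" for j using m M0 rng that by force
        have X00: "X i = 0" for i unfolding X_def using x0 by simp
        show ?thesis
        proof
          fix i assume i: "i \<in> D"
          have Bn: "B i \<le> 0" using X00[of i] X0(2)[of i] pq by (simp add: B_def)
          have "(1 - z i) * Dh * B i \<le> 0" using rng i Dhp Bn by (intro mult_nonneg_nonpos) auto
          moreover have "Dl * B i \<le> 0" using Dlp Bn by (simp add: mult_nonneg_nonpos)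
          then have "z i * (Dl * B i - N * Eh) \<le> z i * (- (N * Eh))" using rng i by (intro mult_left_mono) auto
          ultimately have "0 \<le> z i * (- (N * Eh))" using GH[OF i] by linarith
          then have "z i * (N * Eh) \<le> 0" by simp
          moreover have "0 < N * Eh" using pq by simp
          ultimately have "z i \<le> 0" by (smt (verit) mult_pos_pos)
          then show "x i = 0 \<and> z i = 0" using x0[OF i] rng i by auto
        qed
      next
        case Dln: False
        then have Dhn: "Dh \<le> 0" "Dl < 0" using \<open>\<not> (Dl < 0 \<and> 0 < Dh)\<close> by auto
        obtain m where m: "m \<in> D" "\<forall>j\<in>D. z j \<le> z m"
        proof -
          have "Max (z ` D) \<in> z ` D" using fin Dne by (intro Max_in) auto
          then obtain m where "m \<in> D" "z m = Max (z ` D)" by auto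
          moreover have "\<forall>j\<in>D. z j \<le> Max (z ` D)" using fin by auto
          ultimately show ?thesis using that by auto
        qed
        have M0: "z m = 0"
        proof (rule ccontr)
          assume "z m \<noteq> 0" then have Mp: "z m > 0" using rng m by auto
          have ZM: "Z m \<le> d * z m" using sum_le_card_bound[OF fin m(1), of z "z m"] m by (simp add: Z_def d_def)
          have "(1 - z m) * Dh * B m + z m * (Dl * B m - N * Eh) < 0"
          proof (cases "B m \<ge> 0")
            case True
            have "(1 - z m) * Dh * B m \<le> 0" using rng m Dhn True
              by (intro mult_nonpos_nonneg mult_nonneg_nonpos) auto
            moreover have "Dl * B m \<le> 0" using Dhn True by (simp add: mult_nonpos_nonneg)
            then have "z m * (Dl * B m - N * Eh) \<le> z m * (- N * Eh)" using Mp by (intro mult_left_mono) auto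
            moreover have "z m * (- N * Eh) < 0" using Mp pq by (simp add: mult_pos_neg)
            ultimately show ?thesis by linarith
          next
            case False
            have "(1 - z m) * Dh * B m \<le> (1 - z m) * Dl * B m"
            proof -
              have "Dh * B m \<le> Dl * B m" using pq False by (intro mult_right_mono_neg) auto
              then show ?thesis using rng m by (simp add: mult.assoc mult_left_mono)
            qed
            moreover have "Dl * B m \<le> (- Dl) * (q * (d * z m))"
            proof -
              have "q * Z m \<le> q * (d * z m)" using ZM pq by (intro mult_left_mono) auto
              then have "- B m \<le> q * (d * z m)" using Ale(2)[of m] by linarith
              then have "(- Dl) * (- B m) \<le> (- Dl) * (q * (d * z m))" using Dhn by (intro mult_left_mono) auto
              then show ?thesis by simp
            qed
            moreover have "(- Dl) * (q * (d * z m)) < N * Eh * z m"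
            proof -
              have "d * q * (- Dl) < N * Eh" using bl Dhn by (simp add: d_def)
              then have "(d * q * (- Dl)) * z m < (N * Eh) * z m" using Mp by (intro mult_strict_right_mono) auto
              then show ?thesis by (simp add: algebra_simps)
            qed
            ultimately show ?thesis by (simp add: algebra_simps)
          qed
          with GH[OF m(1)] show False by linarith
        qed
        have z0: "z j = 0" if "j \<in> D" for j using m M0 rng that by force
        have Z00: "Z i = 0" for i unfolding Z_def using z0 by simp
        show ?thesis
        proof
          fix i assume i: "i \<in> D"
          have An: "A i \<ge> 0" using Z00[of i] X0(1)[of i] pq by (simp add: A_def)
          have "(1 - x i) * Dl * A i \<le> 0" using rng i Dhn An
            by (intro mult_nonpos_nonneg mult_nonneg_nonpos) auto
          moreover have "Dh * A i \<le> 0" using Dhn An by (simp add: mult_nonpos_nonneg)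
          then have "x i * (Dh * A i - N * El) \<le> x i * (- (N * El))" using rng i by (intro mult_left_mono) auto
          ultimately have "0 \<le> x i * (- (N * El))" using GL[OF i] by linarith
          then have "x i * (N * El) \<le> 0" by simp
          moreover have "0 < N * El" using pq by simp
          ultimately have "x i \<le> 0" by (smt (verit) mult_pos_pos)
          then show "x i = 0 \<and> z i = 0" using z0[OF i] rng i by auto
        qed
      qed
    qed
  qed
qed


lemma truthful_sums: "(\<Sum>j\<in>{..<n} - {i}. fst (truthful j)) = 0" "(\<Sum>j\<in>{..<n} - {i}. 1 - snd (truthful j)) = 0"
  by (simp_all add: truthful_def)

lemma gains:
  fixes \<Sigma> :: "nat \<Rightarrow> real \<times> real"
  assumes sp: "symmetric_prior n Q" and n: "n \<ge> 2" and i: "i < n"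
    and pos: "\<And>sg. prob_ev n Q (\<lambda>s. s 0 = sg) > 0"
    and cq: "cond_h n Q True = q" and cp: "cond_h n Q False = p"
  defines "X \<equiv> (\<Sum>j\<in>{..<n} - {i}. fst (\<Sigma> j))" and "Z \<equiv> (\<Sum>j\<in>{..<n} - {i}. 1 - snd (\<Sigma> j))"
  shows "(interim_util PS n Q \<Sigma> i False - interim_util PS n Q truthful i False) * (real n - 1)
      = (1 - fst (\<Sigma> i)) * (PS True p - PS False p) * ((1-p)*X - p*Z)
        + fst (\<Sigma> i) * ((PS True q - PS False q) * ((1-p)*X - p*Z)
             - (real n - 1) * (p * (PS True p - PS True q) + (1-p) * (PS False p - PS False q)))"
    and "(interim_util PS n Q \<Sigma> i True - interim_util PS n Q truthful i True) * (real n - 1)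
      = (1 - (1 - snd (\<Sigma> i))) * (PS True q - PS False q) * ((1-q)*X - q*Z)
        + (1 - snd (\<Sigma> i)) * ((PS True p - PS False p) * ((1-q)*X - q*Z)
             - (real n - 1) * (q * (PS True q - PS True p) + (1-q) * (PS False q - PS False p)))"
proof -
  have N: "real n - 1 \<noteq> 0" using n by simp
  note u = util_closed[OF sp n i pos]
  have alg1: "((x*(a1 + d1*U/N) + (1-x)*(a0 + d0*U/N)) - a0)*N = (1-x)*d0*U + x*(d1*U - N*(a0 - a1))"
    if "N \<noteq> 0" for x a1 a0 d1 d0 U N :: real
    using that by (simp add: field_simps)
  have alg2: "((y*(b1 + d1*V/N) + (1-y)*(b0 + d0*V/N)) - b1)*N = (1-(1-y))*d1*V + (1-y)*(d0*V - N*(b1 - b0))"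
    if "N \<noteq> 0" for y b1 b0 d1 d0 V N :: real
    using that by (simp add: field_simps)
  have uF: "interim_util PS n Q \<Sigma> i False = fst (\<Sigma> i) * ((p * PS True q + (1-p) * PS False q) + (PS True q - PS False q) * ((1-p)*X - p*Z) / (real n - 1))
     + (1 - fst (\<Sigma> i)) * ((p * PS True p + (1-p) * PS False p) + (PS True p - PS False p) * ((1-p)*X - p*Z) / (real n - 1))"
    unfolding u X_def Z_def by (simp add: VV_def cq cp rep_prob_def)
  have tF: "interim_util PS n Q truthful i False = p * PS True p + (1-p) * PS False p"
    unfolding u truthful_sums by (simp add: VV_def cq cp rep_prob_def truthful_def)
  have uT: "interim_util PS n Q \<Sigma> i True = snd (\<Sigma> i) * ((q * PS True q + (1-q) * PS False q) + (PS True q - PS False q) * ((1-q)*X - q*Z) / (real n - 1))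
     + (1 - snd (\<Sigma> i)) * ((q * PS True p + (1-q) * PS False p) + (PS True p - PS False p) * ((1-q)*X - q*Z) / (real n - 1))"
    unfolding u X_def Z_def by (simp add: VV_def cq cp rep_prob_def)
  have tT: "interim_util PS n Q truthful i True = q * PS True q + (1-q) * PS False q"
    unfolding u truthful_sums by (simp add: VV_def cq cp rep_prob_def truthful_def)
  show "(interim_util PS n Q \<Sigma> i False - interim_util PS n Q truthful i False) * (real n - 1)
      = (1 - fst (\<Sigma> i)) * (PS True p - PS False p) * ((1-p)*X - p*Z)
        + fst (\<Sigma> i) * ((PS True q - PS False q) * ((1-p)*X - p*Z)
             - (real n - 1) * (p * (PS True p - PS True q) + (1-p) * (PS False p - PS False q)))"
    unfolding uF tF alg1[OF N] by (simp add: algebra_simps)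
  show "(interim_util PS n Q \<Sigma> i True - interim_util PS n Q truthful i True) * (real n - 1)
      = (1 - (1 - snd (\<Sigma> i))) * (PS True q - PS False q) * ((1-q)*X - q*Z)
        + (1 - snd (\<Sigma> i)) * ((PS True p - PS False p) * ((1-q)*X - q*Z)
             - (real n - 1) * (q * (PS True q - PS True p) + (1-q) * (PS False q - PS False p)))"
    unfolding uT tT alg2[OF N] by (simp add: algebra_simps)
qed


lemma sum_restrict:
  fixes n :: nat and f :: "nat \<Rightarrow> real"
  assumes "D \<subseteq> {..<n}" "\<forall>j<n. j \<notin> D \<longrightarrow> f j = 0"
  shows "(\<Sum>j\<in>{..<n}-{i}. f j) = (\<Sum>j\<in>D-{i}. f j)"
  using assms by (intro sum.mono_neutral_right) auto

lemma sum_one_k: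
  assumes "i < k" "k \<le> n"
  shows "(\<Sum>j\<in>{..<n}-{i}. if j < k then (1::real) else 0) = real k - 1"
proof -
  have "(\<Sum>j\<in>{..<n}-{i}. if j < k then (1::real) else 0) = (\<Sum>j\<in>{..<k}-{i}. if j < k then (1::real) else 0)"
    using assms by (intro sum_restrict) auto
  also have "\<dots> = (\<Sum>j\<in>{..<k}-{i}. (1::real))" by (intro sum.cong) auto
  also have "\<dots> = real k - 1" using assms by (simp add: of_nat_diff)
  finally show ?thesis .
qed

lemma main_n:
  fixes ph phh phl :: real and PS :: "bool \<Rightarrow> real \<Rightarrow> real"
  assumes "0 < ph" and "ph < 1"
    and "phh > phl" and "phl > 0" and "phh < 1"
    and spr: "strictly_proper PS"
    and n: "n \<ge> 2" and sp: "symmetric_prior n Q" and mh: "marg_h n Q = ph"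
    and cq: "cond_h n Q True = phh" and cp: "cond_h n Q False = phl"
  shows "bayes_strong_eq PS n Q (nat (kB PS phl phh n)) truthful \<and>
           (\<forall>k::nat. kB PS phl phh n < int k \<and> k \<le> n \<longrightarrow>
              \<not> bayes_strong_eq PS n Q k truthful)"
proof -
  define p where "p = phl"
  define q where "q = phh"
  define N where "N = real n - 1"
  define Dh where "Dh = PS True q - PS False q"
  define Dl where "Dl = PS True p - PS False p"
  define El where "El = p * (PS True p - PS True q) + (1-p) * (PS False p - PS False q)"
  define Eh where "Eh = q * (PS True q - PS True p) + (1-q) * (PS False q - PS False p)"
  have pq: "0 < p" "p < q" "q < 1" using assms by (auto simp: p_def q_def)
  have Np: "N > 0" using n by (simp add: N_def)
  have i1: "p * PS True p + (1 - p) * PS False p > p * PS True q + (1 - p) * PS False q"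
    using spr pq unfolding strictly_proper_def by auto
  have i2: "q * PS True q + (1 - q) * PS False q > q * PS True p + (1 - q) * PS False p"
    using spr pq unfolding strictly_proper_def by auto
  have Elp: "El > 0" using i1 by (simp add: El_def algebra_simps)
  have Ehp: "Eh > 0" using i2 by (simp add: Eh_def algebra_simps)
  have "(q - p) * (Dh - Dl) = (p * PS True p + (1 - p) * PS False p - (p * PS True q + (1 - p) * PS False q))
      + (q * PS True q + (1 - q) * PS False q - (q * PS True p + (1 - q) * PS False p))"
    by (simp add: Dh_def Dl_def algebra_simps)
  also have "\<dots> > 0" using i1 i2 by simp
  finally have "0 < (q - p) * (Dh - Dl)" .
  then have Dlh: "Dl < Dh" using pq by (simp add: zero_less_mult_iff)
  have pos: "prob_ev n Q (\<lambda>s. s 0 = sg) > 0" for sg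
  proof (cases sg)
    case True then show ?thesis using mh assms(1) by (simp add: marg_h_def)
  next
    case False
    have tot: "prob_ev n Q (\<lambda>s. True) = 1" using sp by (simp add: prob_ev_def symmetric_prior_def)
    have "prob_ev n Q (\<lambda>s. True) = prob_ev n Q (\<lambda>s. True \<and> s 0) + prob_ev n Q (\<lambda>s. True \<and> \<not> s 0)"
      by (rule prob_split)
    then have "prob_ev n Q (\<lambda>s. \<not> s 0) = 1 - ph" using tot mh by (simp add: marg_h_def)
    then show ?thesis using False assms(2) by simp
  qed
  have cq': "cond_h n Q True = q" and cp': "cond_h n Q False = p" using cq cp by (simp_all add: p_def q_def)
  note G = gains[OF sp n _ pos cq' cp']
  have GLeq: "(interim_util PS n Q \<Sigma> i False - interim_util PS n Q truthful i False) * N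
      = (1 - fst (\<Sigma> i)) * Dl * ((1-p)*(\<Sum>j\<in>{..<n} - {i}. fst (\<Sigma> j)) - p*(\<Sum>j\<in>{..<n} - {i}. 1 - snd (\<Sigma> j)))
        + fst (\<Sigma> i) * (Dh * ((1-p)*(\<Sum>j\<in>{..<n} - {i}. fst (\<Sigma> j)) - p*(\<Sum>j\<in>{..<n} - {i}. 1 - snd (\<Sigma> j))) - N * El)"
    if "i < n" for i \<Sigma>
    using G(1)[OF that, where \<Sigma>=\<Sigma> and PS=PS] by (simp add: N_def Dl_def Dh_def El_def)
  have GHeq: "(interim_util PS n Q \<Sigma> i True - interim_util PS n Q truthful i True) * N
      = (1 - (1 - snd (\<Sigma> i))) * Dh * ((1-q)*(\<Sum>j\<in>{..<n} - {i}. fst (\<Sigma> j)) - q*(\<Sum>j\<in>{..<n} - {i}. 1 - snd (\<Sigma> j)))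
        + (1 - snd (\<Sigma> i)) * (Dl * ((1-q)*(\<Sum>j\<in>{..<n} - {i}. fst (\<Sigma> j)) - q*(\<Sum>j\<in>{..<n} - {i}. 1 - snd (\<Sigma> j))) - N * Eh)"
    if "i < n" for i \<Sigma>
    using G(2)[OF that, where \<Sigma>=\<Sigma> and PS=PS] by (simp add: N_def Dl_def Dh_def Eh_def)
  define r_h where "r_h = N * El / ((1 - p) * Dh)"
  define r_l where "r_l = N * Eh / (q * (- Dl))"
  have kBh: "Dh > 0 \<Longrightarrow> kB_h PS phl phh n = \<lceil>r_h\<rceil>"
    by (simp add: kB_h_def r_h_def N_def El_def Dh_def p_def q_def)
  have kBh': "\<not> Dh > 0 \<Longrightarrow> kB_h PS phl phh n = int n"
    by (simp add: kB_h_def Dh_def q_def)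
  have kBl: "Dl < 0 \<Longrightarrow> kB_l PS phl phh n = \<lceil>r_l\<rceil>"
    by (simp add: kB_l_def r_l_def N_def Eh_def Dl_def p_def q_def)
  have kBl': "\<not> Dl < 0 \<Longrightarrow> kB_l PS phl phh n = int n"
    by (simp add: kB_l_def Dl_def p_def)
  have part1: "bayes_strong_eq PS n Q (nat (kB PS phl phh n)) truthful"
    unfolding bayes_strong_eq_def
  proof
    assume "\<exists>D \<Sigma>'. D \<subseteq> {..<n} \<and> card D \<le> nat (kB PS phl phh n) \<and> valid_profile n \<Sigma>' \<and>
          (\<forall>i<n. i \<notin> D \<longrightarrow> \<Sigma>' i = truthful i) \<and>
          (\<forall>i\<in>D. \<forall>sg. interim_util PS n Q \<Sigma>' i sg \<ge> interim_util PS n Q truthful i sg) \<and>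
          (\<exists>i\<in>D. \<exists>sg. interim_util PS n Q \<Sigma>' i sg > interim_util PS n Q truthful i sg)"
    then obtain D \<Sigma>' where Dn: "D \<subseteq> {..<n}" and cD: "card D \<le> nat (kB PS phl phh n)"
      and vp: "valid_profile n \<Sigma>'" and out: "\<forall>i<n. i \<notin> D \<longrightarrow> \<Sigma>' i = truthful i"
      and geq: "\<forall>i\<in>D. \<forall>sg. interim_util PS n Q \<Sigma>' i sg \<ge> interim_util PS n Q truthful i sg"
      and str: "\<exists>i\<in>D. \<exists>sg. interim_util PS n Q \<Sigma>' i sg > interim_util PS n Q truthful i sg"
      by blast
    have fin: "finite D" using Dn finite_subset by blast
    define x where "x j = fst (\<Sigma>' j)" for j
    define z where "z j = 1 - snd (\<Sigma>' j)" for j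
    have sx: "(\<Sum>j\<in>{..<n} - {i}. fst (\<Sigma>' j)) = (\<Sum>j\<in>D - {i}. x j)" for i
      unfolding x_def using Dn out by (intro sum_restrict) (auto simp: truthful_def)
    have sz: "(\<Sum>j\<in>{..<n} - {i}. 1 - snd (\<Sigma>' j)) = (\<Sum>j\<in>D - {i}. z j)" for i
      unfolding z_def using Dn out by (intro sum_restrict) (auto simp: truthful_def)
    have sx': "(\<Sum>j\<in>{..<n} - {i}. x j) = (\<Sum>j\<in>D - {i}. x j)" for i using sx[of i] by (simp add: x_def)
    have sz': "(\<Sum>j\<in>{..<n} - {i}. z j) = (\<Sum>j\<in>D - {i}. z j)" for i using sz[of i] by (simp add: z_def)
    have rng: "\<forall>j\<in>D. 0 \<le> x j \<and> x j \<le> 1 \<and> 0 \<le> z j \<and> z j \<le> 1"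
      using vp Dn unfolding valid_profile_def x_def z_def by auto
    have cardkB: "real (card D) - 1 < r" if kle: "kB PS phl phh n \<le> \<lceil>r\<rceil>" and rp: "r > 0" for r
    proof (cases "card D = 0")
      case True then show ?thesis using rp by simp
    next
      case False
      then have "kB PS phl phh n \<ge> 0" using cD by linarith
      then have "int (card D) \<le> kB PS phl phh n" using cD by linarith
      with kle have "int (card D) \<le> \<lceil>r\<rceil>" by linarith
      then show ?thesis by (simp add: le_ceiling_iff)
    qed
    have bh: "(real (card D) - 1) * (1 - p) * Dh < N * El" if Dhp: "Dh > 0"
    proof -
      have den: "(1 - p) * Dh > 0" using pq Dhp by simp
      have "kB PS phl phh n \<le> \<lceil>r_h\<rceil>" using kBh[OF Dhp] by (simp add: kB_def)
      moreover have "r_h > 0" unfolding r_h_def using den Np Elp by (intro divide_pos_pos) auto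
      ultimately have "real (card D) - 1 < r_h" by (rule cardkB)
      then have "(real (card D) - 1) * ((1 - p) * Dh) < N * El" unfolding r_h_def pos_less_divide_eq[OF den] .
      then show ?thesis by (simp only: mult.assoc)
    qed
    have bl: "(real (card D) - 1) * q * (- Dl) < N * Eh" if Dln: "Dl < 0"
    proof -
      have den: "q * (- Dl) > 0" using pq Dln by (simp add: mult_pos_neg)
      have "kB PS phl phh n \<le> \<lceil>r_l\<rceil>" using kBl[OF Dln] by (simp add: kB_def)
      moreover have "r_l > 0" unfolding r_l_def using den Np Ehp by (intro divide_pos_pos) auto
      ultimately have "real (card D) - 1 < r_l" by (rule cardkB)
      then have "(real (card D) - 1) * (q * (- Dl)) < N * Eh" unfolding r_l_def pos_less_divide_eq[OF den] .
      then show ?thesis by (simp only: mult.assoc)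
    qed
    have ge: "\<forall>i\<in>D. 0 \<le> (1 - x i) * Dl * ((1-p) * (\<Sum>j\<in>D-{i}. x j) - p * (\<Sum>j\<in>D-{i}. z j))
                      + x i * (Dh * ((1-p) * (\<Sum>j\<in>D-{i}. x j) - p * (\<Sum>j\<in>D-{i}. z j)) - N * El)
                 \<and> 0 \<le> (1 - z i) * Dh * ((1-q) * (\<Sum>j\<in>D-{i}. x j) - q * (\<Sum>j\<in>D-{i}. z j))
                      + z i * (Dl * ((1-q) * (\<Sum>j\<in>D-{i}. x j) - q * (\<Sum>j\<in>D-{i}. z j)) - N * Eh)"
    proof
      fix i assume i: "i \<in> D"
      then have iN: "i < n" using Dn by auto
      have a: "0 \<le> (interim_util PS n Q \<Sigma>' i False - interim_util PS n Q truthful i False) * N"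
        using geq i Np by simp
      have b: "0 \<le> (interim_util PS n Q \<Sigma>' i True - interim_util PS n Q truthful i True) * N"
        using geq i Np by simp
      show "0 \<le> (1 - x i) * Dl * ((1-p) * (\<Sum>j\<in>D-{i}. x j) - p * (\<Sum>j\<in>D-{i}. z j))
                      + x i * (Dh * ((1-p) * (\<Sum>j\<in>D-{i}. x j) - p * (\<Sum>j\<in>D-{i}. z j)) - N * El)
                 \<and> 0 \<le> (1 - z i) * Dh * ((1-q) * (\<Sum>j\<in>D-{i}. x j) - q * (\<Sum>j\<in>D-{i}. z j))
                      + z i * (Dl * ((1-q) * (\<Sum>j\<in>D-{i}. x j) - q * (\<Sum>j\<in>D-{i}. z j)) - N * Eh)"
        using a b unfolding GLeq[OF iN] GHeq[OF iN] x_def[symmetric] z_def[symmetric] unfolding sx' sz' by simp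
    qed
    have all0: "\<forall>i\<in>D. x i = 0 \<and> z i = 0"
      by (rule core[OF fin rng pq Np Elp Ehp Dlh bh bl ge])
    from str obtain i sg where i: "i \<in> D" and s: "interim_util PS n Q \<Sigma>' i sg > interim_util PS n Q truthful i sg"
      by blast
    have iN: "i < n" using i Dn by auto
    have s0: "(\<Sum>j\<in>D-{i}. x j) = 0" "(\<Sum>j\<in>D-{i}. z j) = 0" using all0 by auto
    have xi: "x i = 0" "z i = 0" using all0 i by auto
    have hT: "(interim_util PS n Q \<Sigma>' i True - interim_util PS n Q truthful i True) * N = 0"
      unfolding GHeq[OF iN] x_def[symmetric] z_def[symmetric] unfolding sx' sz' s0 xi by simp
    have hF: "(interim_util PS n Q \<Sigma>' i False - interim_util PS n Q truthful i False) * N = 0"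
      unfolding GLeq[OF iN] x_def[symmetric] z_def[symmetric] unfolding sx' sz' s0 xi by simp
    have "(interim_util PS n Q \<Sigma>' i sg - interim_util PS n Q truthful i sg) * N = 0"
      using hT hF by (cases sg) auto
    then show False using s Np by simp
  qed
  have part2: "\<not> bayes_strong_eq PS n Q k truthful" if kk: "kB PS phl phh n < int k" "k \<le> n" for k
  proof -
    have "kB_h PS phl phh n < int k \<or> kB_l PS phl phh n < int k"
      using kk by (auto simp: kB_def)
    then show ?thesis
    proof
      assume kh: "kB_h PS phl phh n < int k"
      have Dhp: "Dh > 0" using kh kBh' kk(2) by fastforce
      have den: "(1 - p) * Dh > 0" using pq Dhp by simp
      have rp: "r_h > 0" unfolding r_h_def using den Np Elp by (intro divide_pos_pos) auto
      have "\<lceil>r_h\<rceil> < int k" using kh kBh[OF Dhp] by simp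
      then have "\<lceil>r_h\<rceil> \<le> int k - 1" by linarith
      then have "r_h \<le> of_int (int k - 1)" by (simp only: ceiling_le_iff)
      then have kr: "r_h \<le> real k - 1" by simp
      have k2: "real k - 1 > 0" using kr rp by linarith
      have key: "N * El \<le> (real k - 1) * ((1 - p) * Dh)"
        using kr unfolding r_h_def pos_divide_le_eq[OF den] .
      define \<Sigma>' where "\<Sigma>' j = (if j < k then (1::real, 1::real) else (0, 1))" for j
      have sx: "(\<Sum>j\<in>{..<n} - {i}. fst (\<Sigma>' j)) = real k - 1" if "i < k" for i
        unfolding \<Sigma>'_def using sum_one_k[OF that kk(2)] by (simp add: if_distrib cong: if_cong)
      have sz: "(\<Sum>j\<in>{..<n} - {i}. 1 - snd (\<Sigma>' j)) = 0" for i
        unfolding \<Sigma>'_def by (intro sum.neutral) auto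
      have gF: "interim_util PS n Q \<Sigma>' i False \<ge> interim_util PS n Q truthful i False" if "i < k" for i
      proof -
        have iN: "i < n" using that kk by simp
        have "(interim_util PS n Q \<Sigma>' i False - interim_util PS n Q truthful i False) * N \<ge> 0"
          unfolding GLeq[OF iN] sx[OF that] sz using that key by (simp add: \<Sigma>'_def algebra_simps)
        then show ?thesis using Np by (simp add: zero_le_mult_iff)
      qed
      have gT: "interim_util PS n Q \<Sigma>' i True > interim_util PS n Q truthful i True" if "i < k" for i
      proof -
        have iN: "i < n" using that kk by simp
        have "(interim_util PS n Q \<Sigma>' i True - interim_util PS n Q truthful i True) * N > 0"
          unfolding GHeq[OF iN] sx[OF that] sz using that Dhp pq k2 by (simp add: \<Sigma>'_def)
        then show ?thesis using Np by (simp add: zero_less_mult_iff)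
      qed
      have k0: "0 < k" using k2 by simp
      show ?thesis unfolding bayes_strong_eq_def not_not
      proof (intro exI conjI)
        show "{..<k} \<subseteq> {..<n}" using kk by auto
        show "card {..<k} \<le> k" by simp
        show "valid_profile n \<Sigma>'" by (simp add: valid_profile_def \<Sigma>'_def)
        show "\<forall>i<n. i \<notin> {..<k} \<longrightarrow> \<Sigma>' i = truthful i" by (simp add: \<Sigma>'_def truthful_def)
        show "\<forall>i\<in>{..<k}. \<forall>sg. interim_util PS n Q truthful i sg \<le> interim_util PS n Q \<Sigma>' i sg"
        proof (intro ballI allI)
          fix i sg assume "i \<in> {..<k}"
          then show "interim_util PS n Q truthful i sg \<le> interim_util PS n Q \<Sigma>' i sg"
            using gF gT by (cases sg) (auto intro: less_imp_le)
        qed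
        show "\<exists>i\<in>{..<k}. \<exists>sg. interim_util PS n Q truthful i sg < interim_util PS n Q \<Sigma>' i sg"
          using gT k0 by auto
      qed
    next
      assume kl: "kB_l PS phl phh n < int k"
      have Dln: "Dl < 0" using kl kBl' kk(2) by fastforce
      have den: "q * (- Dl) > 0" using pq Dln by (simp add: mult_pos_neg)
      have rp: "r_l > 0" unfolding r_l_def using den Np Ehp by (intro divide_pos_pos) auto
      have "\<lceil>r_l\<rceil> < int k" using kl kBl[OF Dln] by simp
      then have "\<lceil>r_l\<rceil> \<le> int k - 1" by linarith
      then have "r_l \<le> of_int (int k - 1)" by (simp only: ceiling_le_iff)
      then have kr: "r_l \<le> real k - 1" by simp
      have k2: "real k - 1 > 0" using kr rp by linarith
      have key: "N * Eh \<le> (real k - 1) * (q * (- Dl))"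
        using kr unfolding r_l_def pos_divide_le_eq[OF den] .
      define \<Sigma>' where "\<Sigma>' j = (if j < k then (0::real, 0::real) else (0, 1))" for j
      have sx: "(\<Sum>j\<in>{..<n} - {i}. fst (\<Sigma>' j)) = 0" for i
        unfolding \<Sigma>'_def by (intro sum.neutral) auto
      have sz: "(\<Sum>j\<in>{..<n} - {i}. 1 - snd (\<Sigma>' j)) = real k - 1" if "i < k" for i
        unfolding \<Sigma>'_def using sum_one_k[OF that kk(2)] by (simp add: if_distrib cong: if_cong)
      have gT: "interim_util PS n Q \<Sigma>' i True \<ge> interim_util PS n Q truthful i True" if "i < k" for i
      proof -
        have iN: "i < n" using that kk by simp
        have "(interim_util PS n Q \<Sigma>' i True - interim_util PS n Q truthful i True) * N \<ge> 0"
          unfolding GHeq[OF iN] sx sz[OF that] using that key by (simp add: \<Sigma>'_def algebra_simps)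
        then show ?thesis using Np by (simp add: zero_le_mult_iff)
      qed
      have gF: "interim_util PS n Q \<Sigma>' i False > interim_util PS n Q truthful i False" if "i < k" for i
      proof -
        have iN: "i < n" using that kk by simp
        have "0 < p * (real k - 1)" using pq k2 by simp
        then have "0 < (- Dl) * (p * (real k - 1))" using Dln mult_pos_pos[of "- Dl" "p * (real k - 1)"] by linarith
        then have "(interim_util PS n Q \<Sigma>' i False - interim_util PS n Q truthful i False) * N > 0"
          unfolding GLeq[OF iN] sx sz[OF that] using that by (simp add: \<Sigma>'_def algebra_simps)
        then show ?thesis using Np by (simp add: zero_less_mult_iff)
      qed
      have k0: "0 < k" using k2 by simp
      show ?thesis unfolding bayes_strong_eq_def not_not
      proof (intro exI conjI)
        show "{..<k} \<subseteq> {..<n}" using kk by auto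
        show "card {..<k} \<le> k" by simp
        show "valid_profile n \<Sigma>'" by (simp add: valid_profile_def \<Sigma>'_def)
        show "\<forall>i<n. i \<notin> {..<k} \<longrightarrow> \<Sigma>' i = truthful i" by (simp add: \<Sigma>'_def truthful_def)
        show "\<forall>i\<in>{..<k}. \<forall>sg. interim_util PS n Q truthful i sg \<le> interim_util PS n Q \<Sigma>' i sg"
        proof (intro ballI allI)
          fix i sg assume "i \<in> {..<k}"
          then show "interim_util PS n Q truthful i sg \<le> interim_util PS n Q \<Sigma>' i sg"
            using gF gT by (cases sg) (auto intro: less_imp_le)
        qed
        show "\<exists>i\<in>{..<k}. \<exists>sg. interim_util PS n Q truthful i sg < interim_util PS n Q \<Sigma>' i sg"
          using gF k0 by auto
      qed
    qed
  qed
  show ?thesis using part1 part2 by blast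
qed


theorem theorem2:
  fixes ph phh phl :: real and PS :: "bool \<Rightarrow> real \<Rightarrow> real"
  assumes "0 < ph" and "ph < 1"
    and "phh > phl" and "phl > 0" and "phh < 1"
    and "strictly_proper PS"
  shows "\<exists>n0::nat. \<forall>n\<ge>n0. \<forall>Q. symmetric_prior n Q \<and> marg_h n Q = ph \<and>
            cond_h n Q True = phh \<and> cond_h n Q False = phl \<longrightarrow>
           bayes_strong_eq PS n Q (nat (kB PS phl phh n)) truthful \<and>
           (\<forall>k::nat. kB PS phl phh n < int k \<and> k \<le> n \<longrightarrow>
              \<not> bayes_strong_eq PS n Q k truthful)"
proof (intro exI[of _ 2] allI impI)
  fix n :: nat and Q assume "2 \<le> n" and h: "symmetric_prior n Q \<and> marg_h n Q = ph \<and>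
            cond_h n Q True = phh \<and> cond_h n Q False = phl"
  then show "bayes_strong_eq PS n Q (nat (kB PS phl phh n)) truthful \<and>
           (\<forall>k::nat. kB PS phl phh n < int k \<and> k \<le> n \<longrightarrow>
              \<not> bayes_strong_eq PS n Q k truthful)"
    using main_n[OF assms] by blast
qed

end
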